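(* Let $\mathbf G=(G,\le,\cdot,/,0,1)$ be a left-residuated po-groupoid. Then $\mathbf G$ satisfies both the double negation law $\neg\neg x=x$ (for all $x$) and the condition $$\neg x/y\le \neg z\iff z\le x\cdot y\quad\text{for all }x,y,z\in G$$ if and only if $\mathbf G$ satisfies the equation $x\cdot y=\neg(\neg x/y)$ for all $x,y\in G$. Moreover, in this case, for all $x,y\in G$ we have $x\le y$ iff $\neg y\le \neg x$.
   Context: A (bounded integral) left-residuated po-groupoid is a structure $\mathbf G=(G,\le,\cdot,/,0,1)$ where $(G,\le,0,1)$ is a bounded poset with least element $0$ and greatest element $1$, $\cdot$ is a binary operation on $G$ with $1\cdot x=x\cdot 1=x$ for all $x$ (no associativity, commutativity or monotonicity is assumed), and $/$ is a binary operation on $G$ satisfying the left residuation law: for all $x,y,z\in G$, $x\cdot y\le z\iff x\le z/y$. The negation is defined by $\neg x:=0/x$. *)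

theory Defs
  imports Main
begin

text \<open>A bounded integral left-residuated po-groupoid on the whole type 'a:
  le is a partial order with least element z (0) and greatest element u (1);
  m is a binary operation with unit u; r (written /) is a left residual of m:
  m x y \<le> w  iff  x \<le> r w y.\<close>

definition left_res_pogroupoid ::
  "('a \<Rightarrow> 'a \<Rightarrow> bool) \<Rightarrow> ('a \<Rightarrow> 'a \<Rightarrow> 'a) \<Rightarrow> ('a \<Rightarrow> 'a \<Rightarrow> 'a) \<Rightarrow> 'a \<Rightarrow> 'a \<Rightarrow> bool" where
  "left_res_pogroupoid le m r z u \<longleftrightarrow>
     (\<forall>x. le x x) \<and>
     (\<forall>x y. le x y \<and> le y x \<longrightarrow> x = y) \<and>
     (\<forall>x y w. le x y \<and> le y w \<longrightarrow> le x w) \<and>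
     (\<forall>x. le z x) \<and> (\<forall>x. le x u) \<and>
     (\<forall>x. m u x = x \<and> m x u = x) \<and>
     (\<forall>x y w. le (m x y) w \<longleftrightarrow> le x (r w y))"

definition neg :: "('a \<Rightarrow> 'a \<Rightarrow> 'a) \<Rightarrow> 'a \<Rightarrow> 'a \<Rightarrow> 'a" where
  "neg r z x = r z x"

end

theory Submission
  imports Defs
begin

theorem lemma2:
  fixes le :: "'a \<Rightarrow> 'a \<Rightarrow> bool" and m r :: "'a \<Rightarrow> 'a \<Rightarrow> 'a" and z u :: 'a
  assumes "left_res_pogroupoid le m r z u"
  shows "(((\<forall>x. neg r z (neg r z x) = x) \<and>
           (\<forall>x y w. le (r (neg r z x) y) (neg r z w) \<longleftrightarrow> le w (m x y)))
          \<longleftrightarrow> (\<forall>x y. m x y = neg r z (r (neg r z x) y)))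
       \<and> ((\<forall>x y. m x y = neg r z (r (neg r z x) y)) \<longrightarrow>
          (\<forall>x y. le x y \<longleftrightarrow> le (neg r z y) (neg r z x)))"
proof -
  note d = assms[unfolded left_res_pogroupoid_def]
  have refl: "\<And>x. le x x" using d by blast
  have anti: "\<And>x y. le x y \<Longrightarrow> le y x \<Longrightarrow> x = y" using d by blast
  have bot: "\<And>x. le z x" using d by blast
  have top: "\<And>x. le x u" using d by blast
  have u1: "\<And>x. m u x = x" and u2: "\<And>x. m x u = x" using d by blast+
  have res: "\<And>x y w. le (m x y) w \<longleftrightarrow> le x (r w y)" using d by blast
  have r1: "\<And>a. r a u = a"
    by (metis anti refl res u2)
  have zz: "r z z = u" by (metis anti top res u1 refl)
  have n1: "r z u = z" by (rule r1)
  have B: "\<forall>x y. m x y = r z (r (r z x) y) \<Longrightarrow>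
      (\<forall>x. r z (r z x) = x) \<and> (\<forall>v w. le v (r z w) \<longleftrightarrow> le w (r z v))"
  proof -
    assume h: "\<forall>x y. m x y = r z (r (r z x) y)"
    have dn: "\<And>x. r z (r z x) = x" using h u2 r1 by metis
    have sym1: "le w (r z v)" if "le v (r z w)" for v w
    proof -
      have "le (m v w) z" using that res by blast
      hence "m v w = z" using anti bot by blast
      hence "r z (r (r z v) w) = z" using h by metis
      hence "r (r z v) w = u" by (metis dn zz)
      hence "le u (r (r z v) w)" using refl by simp
      hence "le (m u w) (r z v)" using res by blast
      thus ?thesis using u1 by simp
    qed
    show ?thesis using dn sym1 by blast
  qed
  have iso: "(\<forall>x. r z (r z x) = x) \<Longrightarrow> (\<forall>v w. le v (r z w) \<longleftrightarrow> le w (r z v)) \<Longrightarrow>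
       (\<forall>x y. le x y \<longleftrightarrow> le (r z y) (r z x))" by metis
  have F: "(\<forall>x. r z (r z x) = x) \<and> (\<forall>x y w. le (r (r z x) y) (r z w) \<longleftrightarrow> le w (m x y))
      \<Longrightarrow> (\<forall>x y. m x y = r z (r (r z x) y))"
  proof -
    assume h: "(\<forall>x. r z (r z x) = x) \<and> (\<forall>x y w. le (r (r z x) y) (r z w) \<longleftrightarrow> le w (m x y))"
    have sym: "\<forall>v w. le v (r z w) \<longleftrightarrow> le w (r z v)"
    proof (intro allI)
      fix v w
      have "le (r (r z (r z v)) u) (r z w) \<longleftrightarrow> le w (m (r z v) u)" using h by blast
      thus "le v (r z w) \<longleftrightarrow> le w (r z v)" using h r1 u2 by metis
    qed
    have io: "\<forall>x y. le x y \<longleftrightarrow> le (r z y) (r z x)" using iso h sym by blast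
    show ?thesis
    proof (intro allI)
      fix x y
      have a: "le (r z (r (r z x) y)) (m x y)"
        using h by (metis refl)
      have "le (r (r z x) y) (r z (m x y))" using h refl by blast
      hence b: "le (m x y) (r z (r (r z x) y))" using sym by blast
      show "m x y = r z (r (r z x) y)" using anti a b by blast
    qed
  qed
  have C: "\<forall>x y. m x y = r z (r (r z x) y) \<Longrightarrow>
      (\<forall>x. r z (r z x) = x) \<and> (\<forall>x y w. le (r (r z x) y) (r z w) \<longleftrightarrow> le w (m x y))"
  proof -
    assume h: "\<forall>x y. m x y = r z (r (r z x) y)"
    from B[OF h] have dn: "\<forall>x. r z (r z x) = x" and sy: "\<forall>v w. le v (r z w) \<longleftrightarrow> le w (r z v)" by blast+
    show ?thesis using dn sy h by metis
  qed
  show ?thesis unfolding neg_def using B C F iso by blast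
qed

end
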